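(* Let $\mathbb{F}$ be a field of characteristic different from $2$, let $n\geq 3$, and let $\mathcal{A}$ be a division $*$-algebra which is one of: $\mathbb{F}$, a binarion algebra $\mathcal{B}(\mathbb{F})$, or a quaternion algebra $\mathcal{Q}(\mathbb{F})$ (as defined in the context). Let $H_n(\mathcal{A})$ be the Jordan algebra of self-adjoint $n\times n$ matrices over $\mathcal{A}$. Then every 2-local inner derivation on $H_n(\mathcal{A})$ is a derivation.
   Context: $\mathbb{F}$ carries the trivial involution. $\mathcal{B}(\mathbb{F})$ is the associative unital algebra with basis $\mathbf{1},i$, $i^2=\lambda\mathbf{1}$ ($\lambda\in\mathbb{F}\setminus\{0\}$), with involution $\overline{\alpha_0\mathbf{1}+\alpha_1 i}=\alpha_0\mathbf{1}-\alpha_1 i$. $\mathcal{Q}(\mathbb{F})$ is the associative unital algebra with basis $\mathbf{1},i,j,k$, $i^2=\lambda\mathbf{1}$, $j^2=\mu\mathbf{1}$, $ij=-ji=k$ ($\lambda,\mu\in\mathbb{F}\setminus\{0\}$), with involution $\overline{\alpha_0\mathbf{1}+\alpha_1i+\alpha_2j+\alpha_3k}=\alpha_0\mathbf{1}-\alpha_1i-\alpha_2j-\alpha_3k$. $M_n(\mathcal{A})$ has involution $(a_{i,j})^*=(\overline{a_{j,i}})$, and $H_n(\mathcal{A})=\{x\in M_n(\mathcal{A}):x^*=x\}$ with Jordan product $a\circ b=\frac12(ab+ba)$. A derivation is a linear map $D$ with $D(x\circ y)=D(x)\circ y+x\circ D(y)$. An inner derivation is a map $x\mapsto\sum_{k=1}^m\big(a_k\circ(b_k\circ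 x)-b_k\circ(a_k\circ x)\big)$ with $a_k,b_k\in H_n(\mathcal{A})$. A 2-local inner derivation is a map $\Delta:H_n(\mathcal{A})\to H_n(\mathcal{A})$ (not assumed linear) such that for every $x,y$ there is an inner derivation $D$ with $\Delta(x)=D(x)$, $\Delta(y)=D(y)$. *)

theory Defs
  imports Main "HOL-Library.Product_Plus"
begin

text \<open>Elements of the algebras are represented by coordinate quadruples
  (alpha0, alpha1, alpha2, alpha3) w.r.t. the basis 1, i, j, k of the quaternion
  algebra with i^2 = l, j^2 = m, ij = -ji = k.  The field F and the binarion
  algebra B(F) are the subalgebras spanned by 1, resp. 1, i.\<close>

type_synonym 'a qd = "'a \<times> 'a \<times> 'a \<times> 'a"
type_synonym 'a mat = "nat \<Rightarrow> nat \<Rightarrow> 'a qd"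

datatype alg_kind = FieldAlg | Binarion | Quaternion

fun qmul :: "'a::field \<Rightarrow> 'a \<Rightarrow> 'a qd \<Rightarrow> 'a qd \<Rightarrow> 'a qd" where
  "qmul l m (a0, a1, a2, a3) (b0, b1, b2, b3) =
     (a0*b0 + l*a1*b1 + m*a2*b2 - l*m*a3*b3,
      a0*b1 + a1*b0 - m*a2*b3 + m*a3*b2,
      a0*b2 + a2*b0 + l*a1*b3 - l*a3*b1,
      a0*b3 + a3*b0 + a1*b2 - a2*b1)"

definition qone :: "'a::field qd" where "qone = (1, 0, 0, 0)"

fun qconj :: "'a::field qd \<Rightarrow> 'a qd" where
  "qconj (a0, a1, a2, a3) = (a0, -a1, -a2, -a3)"

fun qsmul :: "'a::field \<Rightarrow> 'a qd \<Rightarrow> 'a qd" where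
  "qsmul c (a0, a1, a2, a3) = (c*a0, c*a1, c*a2, c*a3)"

definition alg_carrier :: "alg_kind \<Rightarrow> 'a::field qd set" where
  "alg_carrier k = (case k of
      FieldAlg \<Rightarrow> {(a, 0, 0, 0) | a. True}
    | Binarion \<Rightarrow> {(a, b, 0, 0) | a b. True}
    | Quaternion \<Rightarrow> UNIV)"

definition division_alg :: "alg_kind \<Rightarrow> 'a::field \<Rightarrow> 'a \<Rightarrow> bool" where
  "division_alg k l m \<longleftrightarrow>
     (\<forall>x\<in>alg_carrier k. x \<noteq> 0 \<longrightarrow>
        (\<exists>y\<in>alg_carrier k. qmul l m x y = qone \<and> qmul l m y x = qone))"

definition mat_carrier :: "alg_kind \<Rightarrow> nat \<Rightarrow> 'a::field mat set" where
  "mat_carrier k n = {A. (\<forall>i j. i < n \<and> j < n \<longrightarrow> A i j \<in> alg_carrier k) \<and>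
                         (\<forall>i j. \<not> (i < n \<and> j < n) \<longrightarrow> A i j = 0)}"

definition mstar :: "'a::field mat \<Rightarrow> 'a mat" where
  "mstar A = (\<lambda>i j. qconj (A j i))"

definition Herm :: "alg_kind \<Rightarrow> nat \<Rightarrow> 'a::field mat set" where
  "Herm k n = {A \<in> mat_carrier k n. mstar A = A}"

definition mzero :: "'a::field mat" where "mzero = (\<lambda>i j. 0)"

definition madd :: "'a::field mat \<Rightarrow> 'a mat \<Rightarrow> 'a mat" where
  "madd A B = (\<lambda>i j. A i j + B i j)"

definition msub :: "'a::field mat \<Rightarrow> 'a mat \<Rightarrow> 'a mat" where
  "msub A B = (\<lambda>i j. A i j - B i j)"

definition msmul :: "'a::field \<Rightarrow> 'a mat \<Rightarrow> 'a mat" where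
  "msmul c A = (\<lambda>i j. qsmul c (A i j))"

definition mmul :: "'a::field \<Rightarrow> 'a \<Rightarrow> nat \<Rightarrow> 'a mat \<Rightarrow> 'a mat \<Rightarrow> 'a mat" where
  "mmul l m n A B = (\<lambda>i j. if i < n \<and> j < n
       then (\<Sum>t<n. qmul l m (A i t) (B t j)) else 0)"

definition jprod :: "'a::field \<Rightarrow> 'a \<Rightarrow> nat \<Rightarrow> 'a mat \<Rightarrow> 'a mat \<Rightarrow> 'a mat" where
  "jprod l m n A B = msmul (inverse 2) (madd (mmul l m n A B) (mmul l m n B A))"

definition is_derivation :: "alg_kind \<Rightarrow> 'a::field \<Rightarrow> 'a \<Rightarrow> nat \<Rightarrow> ('a mat \<Rightarrow> 'a mat) \<Rightarrow> bool" where
  "is_derivation k l m n D \<longleftrightarrow>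
     (\<forall>x\<in>Herm k n. D x \<in> Herm k n) \<and>
     (\<forall>x\<in>Herm k n. \<forall>y\<in>Herm k n. D (madd x y) = madd (D x) (D y)) \<and>
     (\<forall>c. \<forall>x\<in>Herm k n. D (msmul c x) = msmul c (D x)) \<and>
     (\<forall>x\<in>Herm k n. \<forall>y\<in>Herm k n.
        D (jprod l m n x y) = madd (jprod l m n (D x) y) (jprod l m n x (D y)))"

definition is_inner_derivation :: "alg_kind \<Rightarrow> 'a::field \<Rightarrow> 'a \<Rightarrow> nat \<Rightarrow> ('a mat \<Rightarrow> 'a mat) \<Rightarrow> bool" where
  "is_inner_derivation k l m n D \<longleftrightarrow>
     (\<exists>ps. set ps \<subseteq> Herm k n \<times> Herm k n \<and>
        (\<forall>x\<in>Herm k n. D x = foldr madd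
            (map (\<lambda>(a, b). msub (jprod l m n a (jprod l m n b x))
                                 (jprod l m n b (jprod l m n a x))) ps) mzero))"

definition is_2local_inner_derivation :: "alg_kind \<Rightarrow> 'a::field \<Rightarrow> 'a \<Rightarrow> nat \<Rightarrow> ('a mat \<Rightarrow> 'a mat) \<Rightarrow> bool" where
  "is_2local_inner_derivation k l m n \<Delta> \<longleftrightarrow>
     (\<forall>x\<in>Herm k n. \<Delta> x \<in> Herm k n) \<and>
     (\<forall>x\<in>Herm k n. \<forall>y\<in>Herm k n. \<exists>D. is_inner_derivation k l m n D \<and>
        \<Delta> x = D x \<and> \<Delta> y = D y)"

end

theory Submission
  imports Defs
begin


lemma qmul_alt: "qmul l m a b =
  (fst a * fst b + l * fst (snd a) * fst (snd b) + m * fst (snd (snd a)) * fst (snd (snd b)) - l*m* snd (snd (snd a)) * snd (snd (snd b)),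
   fst a * fst (snd b) + fst (snd a) * fst b - m * fst (snd (snd a)) * snd (snd (snd b)) + m * snd (snd (snd a)) * fst (snd (snd b)),
   fst a * fst (snd (snd b)) + fst (snd (snd a)) * fst b + l * fst (snd a) * snd (snd (snd b)) - l * snd (snd (snd a)) * fst (snd b),
   fst a * snd (snd (snd b)) + snd (snd (snd a)) * fst b + fst (snd a) * fst (snd (snd b)) - fst (snd (snd a)) * fst (snd b))"
  by (cases a; cases b) auto

lemma qsmul_alt: "qsmul c a = (c * fst a, c * fst (snd a), c * fst (snd (snd a)), c * snd (snd (snd a)))"
  by (cases a) auto

lemma qconj_alt: "qconj a = (fst a, - fst (snd a), - fst (snd (snd a)), - snd (snd (snd a)))"
  by (cases a) auto

lemma qd_eq_iff: "(a::'a qd) = b \<longleftrightarrow> fst a = fst b \<and> fst (snd a) = fst (snd b) \<and> fst (snd (snd a)) = fst (snd (snd b)) \<and> snd (snd (snd a)) = snd (snd (snd b))"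
  by (auto simp: prod_eq_iff)

lemmas qexp = qmul_alt qsmul_alt qconj_alt qd_eq_iff

lemma qmul_assoc: "qmul l m (qmul l m a b) c = qmul l m a (qmul l m b c)"
  by (simp add: qexp algebra_simps)

lemma qmul_add_left: "qmul l m (a + b) c = qmul l m a c + qmul l m b c"
  by (simp add: qexp algebra_simps)
lemma qmul_add_right: "qmul l m a (b + c) = qmul l m a b + qmul l m a c"
  by (simp add: qexp algebra_simps)
lemma qmul_diff_left: "qmul l m (a - b) c = qmul l m a c - qmul l m b c"
  by (simp add: qexp algebra_simps)
lemma qmul_diff_right: "qmul l m a (b - c) = qmul l m a b - qmul l m a c"
  by (simp add: qexp algebra_simps)
lemma qmul_zero_left[simp]: "qmul l m 0 c = 0"
  by (simp add: qexp)
lemma qmul_zero_right[simp]: "qmul l m c 0 = 0"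
  by (simp add: qexp)
lemma qmul_smul_left: "qmul l m (qsmul c a) b = qsmul c (qmul l m a b)"
  by (simp add: qexp algebra_simps)
lemma qmul_smul_right: "qmul l m a (qsmul c b) = qsmul c (qmul l m a b)"
  by (simp add: qexp algebra_simps)
lemma qmul_re_comm: "fst (qmul l m a b) = fst (qmul l m b a)"
  by (simp add: qexp algebra_simps)
lemma qconj_mul: "qconj (qmul l m a b) = qmul l m (qconj b) (qconj a)"
  by (simp add: qexp algebra_simps)
lemma qconj_add: "qconj (a + b) = qconj a + qconj b"
  by (simp add: qexp algebra_simps)
lemma qconj_zero[simp]: "qconj 0 = 0"
  by (simp add: qexp)
lemma qconj_qconj[simp]: "qconj (qconj a) = a"
  by (simp add: qexp)

lemma qmul_sum_left: "qmul l m (\<Sum>t\<in>A. f t) c = (\<Sum>t\<in>A. qmul l m (f t) c)"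
  by (induction A rule: infinite_finite_induct) (auto simp: qmul_add_left)
lemma qmul_sum_right: "qmul l m c (\<Sum>t\<in>A. f t) = (\<Sum>t\<in>A. qmul l m c (f t))"
  by (induction A rule: infinite_finite_induct) (auto simp: qmul_add_right)
lemma qconj_sum: "qconj (\<Sum>t\<in>A. f t) = (\<Sum>t\<in>A. qconj (f t))"
  by (induction A rule: infinite_finite_induct) (auto simp: qconj_add)



lemma qsmul_add: "qsmul c (a + b) = qsmul c a + qsmul c b"
  by (simp add: qexp algebra_simps)
lemma qsmul_diff: "qsmul c (a - b) = qsmul c a - qsmul c b"
  by (simp add: qexp algebra_simps)
lemma qsmul_zero[simp]: "qsmul c 0 = 0"
  by (simp add: qexp)
lemma qsmul_sum: "qsmul c (\<Sum>t\<in>A. f t) = (\<Sum>t\<in>A. qsmul c (f t))"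
  by (induction A rule: infinite_finite_induct) (auto simp: qsmul_add)
lemma qconj_diff: "qconj (a - b) = qconj a - qconj b"
  by (simp add: qexp algebra_simps)
lemma qconj_smul: "qconj (qsmul c a) = qsmul c (qconj a)"
  by (simp add: qexp algebra_simps)

lemma mmul_madd_left: "mmul l m n (madd A B) C = madd (mmul l m n A C) (mmul l m n B C)"
  by (auto simp: fun_eq_iff mmul_def madd_def qmul_add_left sum.distrib)
lemma mmul_madd_right: "mmul l m n C (madd A B) = madd (mmul l m n C A) (mmul l m n C B)"
  by (auto simp: fun_eq_iff mmul_def madd_def qmul_add_right sum.distrib)
lemma mmul_msub_left: "mmul l m n (msub A B) C = msub (mmul l m n A C) (mmul l m n B C)"
  by (auto simp: fun_eq_iff mmul_def msub_def qmul_diff_left sum_subtractf)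
lemma mmul_msub_right: "mmul l m n C (msub A B) = msub (mmul l m n C A) (mmul l m n C B)"
  by (auto simp: fun_eq_iff mmul_def msub_def qmul_diff_right sum_subtractf)
lemma mmul_msmul_left: "mmul l m n (msmul c A) C = msmul c (mmul l m n A C)"
  by (auto simp: fun_eq_iff mmul_def msmul_def qmul_smul_left qsmul_sum)
lemma mmul_msmul_right: "mmul l m n C (msmul c A) = msmul c (mmul l m n C A)"
  by (auto simp: fun_eq_iff mmul_def msmul_def qmul_smul_right qsmul_sum)
lemma mmul_mzero_left[simp]: "mmul l m n mzero C = mzero"
  by (auto simp: fun_eq_iff mmul_def mzero_def)
lemma mmul_mzero_right[simp]: "mmul l m n C mzero = mzero"
  by (auto simp: fun_eq_iff mmul_def mzero_def)

lemma mmul_assoc: "mmul l m n (mmul l m n A B) C = mmul l m n A (mmul l m n B C)"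
proof -
  have "(\<Sum>t<n. qmul l m (\<Sum>s<n. qmul l m (A i s) (B s t)) (C t j))
      = (\<Sum>s<n. qmul l m (A i s) (\<Sum>t<n. qmul l m (B s t) (C t j)))" for i j
  proof -
    have "(\<Sum>t<n. qmul l m (\<Sum>s<n. qmul l m (A i s) (B s t)) (C t j))
      = (\<Sum>t<n. \<Sum>s<n. qmul l m (A i s) (qmul l m (B s t) (C t j)))"
      by (simp add: qmul_sum_left qmul_assoc)
    also have "\<dots> = (\<Sum>s<n. \<Sum>t<n. qmul l m (A i s) (qmul l m (B s t) (C t j)))"
      by (rule sum.swap)
    also have "\<dots> = (\<Sum>s<n. qmul l m (A i s) (\<Sum>t<n. qmul l m (B s t) (C t j)))"
      by (simp add: qmul_sum_right)
    finally show ?thesis .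
  qed
  then show ?thesis
    by (simp add: fun_eq_iff mmul_def)
qed

lemma mstar_mmul: "mstar (mmul l m n A B) = mmul l m n (mstar B) (mstar A)"
  by (auto simp: fun_eq_iff mmul_def mstar_def qconj_sum qconj_mul)
lemma mstar_madd: "mstar (madd A B) = madd (mstar A) (mstar B)"
  by (auto simp: fun_eq_iff madd_def mstar_def qconj_add)
lemma mstar_msub: "mstar (msub A B) = msub (mstar A) (mstar B)"
  by (auto simp: fun_eq_iff msub_def mstar_def qconj_diff)
lemma mstar_msmul: "mstar (msmul c A) = msmul c (mstar A)"
  by (auto simp: fun_eq_iff msmul_def mstar_def qconj_smul)

lemma madd_comm: "madd A B = madd B A"
  by (auto simp: fun_eq_iff madd_def add.commute)

lemma carrier_add: "a \<in> alg_carrier k \<Longrightarrow> b \<in> alg_carrier k \<Longrightarrow> a + b \<in> alg_carrier k"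
  by (cases k) (auto simp: alg_carrier_def zero_prod_def)
lemma carrier_diff: "a \<in> alg_carrier k \<Longrightarrow> b \<in> alg_carrier k \<Longrightarrow> a - b \<in> alg_carrier k"
  by (cases k) (auto simp: alg_carrier_def zero_prod_def)
lemma carrier_smul: "a \<in> alg_carrier k \<Longrightarrow> qsmul c a \<in> alg_carrier k"
  by (cases k) (auto simp: alg_carrier_def)
lemma carrier_mul: "a \<in> alg_carrier k \<Longrightarrow> b \<in> alg_carrier k \<Longrightarrow> qmul l m a b \<in> alg_carrier k"
  by (cases k) (auto simp: alg_carrier_def)
lemma carrier_zero: "0 \<in> alg_carrier k"
  by (cases k) (auto simp: alg_carrier_def zero_prod_def)
lemma carrier_sum: "(\<And>t. t \<in> A \<Longrightarrow> f t \<in> alg_carrier k) \<Longrightarrow> (\<Sum>t\<in>A. f t) \<in> alg_carrier k"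
  by (induction A rule: infinite_finite_induct) (auto simp: carrier_zero carrier_add)

lemma mc_madd: "A \<in> mat_carrier k n \<Longrightarrow> B \<in> mat_carrier k n \<Longrightarrow> madd A B \<in> mat_carrier k n"
  by (auto simp: mat_carrier_def madd_def carrier_add)
lemma mc_msub: "A \<in> mat_carrier k n \<Longrightarrow> B \<in> mat_carrier k n \<Longrightarrow> msub A B \<in> mat_carrier k n"
  by (auto simp: mat_carrier_def msub_def carrier_diff)
lemma mc_msmul: "A \<in> mat_carrier k n \<Longrightarrow> msmul c A \<in> mat_carrier k n"
  by (auto simp: mat_carrier_def msmul_def carrier_smul)
lemma mc_mmul: "A \<in> mat_carrier k n \<Longrightarrow> B \<in> mat_carrier k n \<Longrightarrow> mmul l m n A B \<in> mat_carrier k n"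
  unfolding mat_carrier_def mmul_def
  by (auto intro!: carrier_sum carrier_mul)

lemma Herm_madd: "A \<in> Herm k n \<Longrightarrow> B \<in> Herm k n \<Longrightarrow> madd A B \<in> Herm k n"
  by (auto simp: Herm_def mc_madd mstar_madd)
lemma Herm_msub: "A \<in> Herm k n \<Longrightarrow> B \<in> Herm k n \<Longrightarrow> msub A B \<in> Herm k n"
  by (auto simp: Herm_def mc_msub mstar_msub)
lemma Herm_msmul: "A \<in> Herm k n \<Longrightarrow> msmul c A \<in> Herm k n"
  by (auto simp: Herm_def mc_msmul mstar_msmul)
lemma Herm_jprod: "A \<in> Herm k n \<Longrightarrow> B \<in> Herm k n \<Longrightarrow> jprod l m n A B \<in> Herm k n"
proof -
  assume a: "A \<in> Herm k n" "B \<in> Herm k n"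
  have "mstar (madd (mmul l m n A B) (mmul l m n B A)) = madd (mmul l m n A B) (mmul l m n B A)"
    using a by (simp add: Herm_def mstar_madd mstar_mmul madd_comm)
  moreover have "madd (mmul l m n A B) (mmul l m n B A) \<in> mat_carrier k n"
    using a by (simp add: Herm_def mc_madd mc_mmul)
  ultimately show ?thesis
    unfolding jprod_def Herm_def by (simp add: mc_msmul mstar_msmul)
qed



definition tr2 :: "'a::field \<Rightarrow> 'a \<Rightarrow> nat \<Rightarrow> 'a mat \<Rightarrow> 'a mat \<Rightarrow> 'a" where
  "tr2 l m n X Y = (\<Sum>i<n. \<Sum>t<n. fst (qmul l m (X i t) (Y t i)))"

lemma fst_qsmul: "fst (qsmul c a) = c * fst a"
  by (simp add: qexp)

lemma tr2_madd_left: "tr2 l m n (madd A B) Y = tr2 l m n A Y + tr2 l m n B Y"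
  by (simp add: tr2_def madd_def qmul_add_left sum.distrib)
lemma tr2_madd_right: "tr2 l m n Y (madd A B) = tr2 l m n Y A + tr2 l m n Y B"
  by (simp add: tr2_def madd_def qmul_add_right sum.distrib)
lemma tr2_msub_left: "tr2 l m n (msub A B) Y = tr2 l m n A Y - tr2 l m n B Y"
  by (simp add: tr2_def msub_def qmul_diff_left sum_subtractf)
lemma tr2_msub_right: "tr2 l m n Y (msub A B) = tr2 l m n Y A - tr2 l m n Y B"
  by (simp add: tr2_def msub_def qmul_diff_right sum_subtractf)
lemma tr2_msmul_left: "tr2 l m n (msmul c A) Y = c * tr2 l m n A Y"
  by (simp add: tr2_def msmul_def qmul_smul_left fst_qsmul sum_distrib_left)
lemma tr2_msmul_right: "tr2 l m n Y (msmul c A) = c * tr2 l m n Y A"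
  by (simp add: tr2_def msmul_def qmul_smul_right fst_qsmul sum_distrib_left)
lemma tr2_mzero_left[simp]: "tr2 l m n mzero Y = 0"
  by (simp add: tr2_def mzero_def)
lemma tr2_mzero_right[simp]: "tr2 l m n Y mzero = 0"
  by (simp add: tr2_def mzero_def)

lemma tr2_comm: "tr2 l m n X Y = tr2 l m n Y X"
proof -
  have "tr2 l m n X Y = (\<Sum>t<n. \<Sum>i<n. fst (qmul l m (X i t) (Y t i)))"
    unfolding tr2_def by (rule sum.swap)
  also have "\<dots> = tr2 l m n Y X"
    unfolding tr2_def by (simp add: qmul_re_comm)
  finally show ?thesis .
qed

lemma tr2_mmul: "tr2 l m n (mmul l m n A X) Y = tr2 l m n A (mmul l m n X Y)"
proof -
  have "tr2 l m n (mmul l m n A X) Y = (\<Sum>i<n. \<Sum>t<n. \<Sum>s<n. fst (qmul l m (A i s) (qmul l m (X s t) (Y t i))))"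
    by (simp add: tr2_def mmul_def qmul_sum_left qmul_assoc fst_sum)
  also have "\<dots> = (\<Sum>i<n. \<Sum>s<n. \<Sum>t<n. fst (qmul l m (A i s) (qmul l m (X s t) (Y t i))))"
    by (rule sum.cong[OF refl], rule sum.swap)
  also have "\<dots> = tr2 l m n A (mmul l m n X Y)"
    by (simp add: tr2_def mmul_def qmul_sum_right fst_sum)
  finally show ?thesis .
qed

lemma tr2_jprod: "tr2 l m n (jprod l m n a z) y = tr2 l m n z (jprod l m n a y)"
proof -
  have 1: "tr2 l m n (mmul l m n a z) y = tr2 l m n z (mmul l m n y a)"
    by (metis tr2_comm tr2_mmul)
  have 2: "tr2 l m n (mmul l m n z a) y = tr2 l m n z (mmul l m n a y)"
    by (metis tr2_mmul)
  show ?thesis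
    unfolding jprod_def tr2_msmul_left tr2_msmul_right tr2_madd_left tr2_madd_right 1 2
    by simp
qed

definition Tder :: "'a::field \<Rightarrow> 'a \<Rightarrow> nat \<Rightarrow> 'a mat \<Rightarrow> 'a mat \<Rightarrow> 'a mat \<Rightarrow> 'a mat" where
  "Tder l m n a b x = msub (jprod l m n a (jprod l m n b x)) (jprod l m n b (jprod l m n a x))"

lemma tr2_Tder: "tr2 l m n (Tder l m n a b x) y = - tr2 l m n x (Tder l m n a b y)"
  unfolding Tder_def tr2_msub_left tr2_msub_right tr2_jprod by simp

lemma tr2_foldr: "tr2 l m n (foldr madd (map (\<lambda>(a, b). Tder l m n a b x) ps) mzero) y
   = - tr2 l m n x (foldr madd (map (\<lambda>(a, b). Tder l m n a b y) ps) mzero)"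
  by (induction ps) (auto simp: tr2_madd_left tr2_madd_right tr2_Tder)



lemmas mnorm = mmul_madd_left mmul_madd_right mmul_msub_left mmul_msub_right
  mmul_msmul_left mmul_msmul_right mmul_assoc

lemmas entry = fun_eq_iff madd_def msub_def msmul_def qsmul_alt qd_eq_iff

lemma Tder_formula:
  "Tder l m n a b x = msmul (inverse 4) (msub (mmul l m n (msub (mmul l m n a b) (mmul l m n b a)) x)
       (mmul l m n x (msub (mmul l m n a b) (mmul l m n b a))))"
  unfolding Tder_def jprod_def
  apply (simp only: mnorm)
  apply (simp add: entry algebra_simps)
  done

definition Sof :: "'a::field \<Rightarrow> 'a \<Rightarrow> nat \<Rightarrow> ('a mat \<times> 'a mat) list \<Rightarrow> 'a mat" where
  "Sof l m n ps = foldr madd (map (\<lambda>(a, b). msmul (inverse 4) (msub (mmul l m n a b) (mmul l m n b a))) ps) mzero"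

lemma foldr_Tder: "foldr madd (map (\<lambda>(a, b). Tder l m n a b x) ps) mzero
   = msub (mmul l m n (Sof l m n ps) x) (mmul l m n x (Sof l m n ps))"
proof (induction ps)
  case Nil
  then show ?case by (simp add: Sof_def, simp add: fun_eq_iff msub_def mzero_def)
next
  case (Cons p ps)
  obtain a b where p: "p = (a, b)" by (cases p)
  show ?case
    using Cons unfolding p
    apply (simp add: Sof_def Tder_formula)
    apply (simp only: mnorm)
    apply (simp add: entry algebra_simps)
    done
qed

lemma ad_leibniz: "msub (mmul l m n S (jprod l m n x y)) (mmul l m n (jprod l m n x y) S)
  = madd (jprod l m n (msub (mmul l m n S x) (mmul l m n x S)) y) (jprod l m n x (msub (mmul l m n S y) (mmul l m n y S)))"
  unfolding jprod_def
  apply (simp only: mnorm)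
  apply (simp add: entry algebra_simps)
  done



definition Emat :: "nat \<Rightarrow> nat \<Rightarrow> 'a::field qd \<Rightarrow> 'a mat" where
  "Emat p q e = (\<lambda>i j. if i = p \<and> j = q then e else 0)"

lemma tr2_Emat: "p < n \<Longrightarrow> q < n \<Longrightarrow> tr2 l m n z (Emat p q e) = fst (qmul l m (z q p) e)"
proof -
  assume pq: "p < n" "q < n"
  have "tr2 l m n z (Emat p q e) = (\<Sum>i<n. if i = q then fst (qmul l m (z q p) e) else 0)"
    unfolding tr2_def
  proof (rule sum.cong[OF refl])
    fix i assume "i \<in> {..<n}"
    have "(\<Sum>t<n. fst (qmul l m (z i t) (Emat p q e t i))) = (\<Sum>t<n. if t = p then (if i = q then fst (qmul l m (z i t) e) else 0) else 0)"
      by (rule sum.cong) (auto simp: Emat_def)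
    also have "\<dots> = (if i = q then fst (qmul l m (z q p) e) else 0)"
      using pq by simp
    finally show "(\<Sum>t<n. fst (qmul l m (z i t) (Emat p q e t i))) = (if i = q then fst (qmul l m (z q p) e) else 0)" .
  qed
  also have "\<dots> = fst (qmul l m (z q p) e)"
    using pq by simp
  finally show ?thesis .
qed

lemma carrier_conj: "a \<in> alg_carrier k \<Longrightarrow> qconj a \<in> alg_carrier k"
  by (cases k) (auto simp: alg_carrier_def)

lemma Emat_mc: "p < n \<Longrightarrow> q < n \<Longrightarrow> e \<in> alg_carrier k \<Longrightarrow> Emat p q e \<in> mat_carrier k n"
  by (auto simp: mat_carrier_def Emat_def carrier_zero)

lemma mstar_Emat: "mstar (Emat p q e) = Emat q p (qconj e)"
  by (auto simp: fun_eq_iff mstar_def Emat_def)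

lemma Emat_Herm: "p < n \<Longrightarrow> q < n \<Longrightarrow> e \<in> alg_carrier k \<Longrightarrow> madd (Emat p q e) (Emat q p (qconj e)) \<in> Herm k n"
  unfolding Herm_def
  by (auto simp: mc_madd Emat_mc carrier_conj mstar_madd mstar_Emat madd_comm)

lemma qone_carrier: "qone \<in> alg_carrier k"
  by (cases k) (auto simp: alg_carrier_def qone_def)

lemma Emat_Herm_diag: "p < n \<Longrightarrow> Emat p p qone \<in> Herm k n"
  unfolding Herm_def
  using Emat_mc[OF _ _ qone_carrier, of p n p k]
  by (auto simp: mstar_Emat qone_def)

lemma re_conj_conj: "fst (qmul l m (qconj a) (qconj e)) = fst (qmul l m a e)"
  by (simp add: qexp)

lemma two_ne: "(2::'a::field) \<noteq> 0 \<Longrightarrow> (x::'a) = - x \<Longrightarrow> x = 0"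
  by (metis add_eq_0_iff2 mult_2 mult_eq_0_iff)

lemma nondeg_entry:
  assumes l: "l \<noteq> 0" and m: "m \<noteq> 0"
    and w: "w \<in> alg_carrier k"
    and h: "\<And>e. e \<in> alg_carrier k \<Longrightarrow> fst (qmul l m w e) = 0"
  shows "w = 0"
proof -
  obtain w0 w1 w2 w3 where wd: "w = (w0, w1, w2, w3)" by (cases w) auto
  have 0: "w0 = 0" using h[of "(1,0,0,0)"] by (cases k) (auto simp: alg_carrier_def wd)
  show ?thesis
  proof (cases k)
    case FieldAlg
    then show ?thesis using w 0 by (auto simp: alg_carrier_def wd zero_prod_def)
  next
    case Binarion
    have "l * w1 = 0" using h[of "(0,1,0,0)"] Binarion by (auto simp: alg_carrier_def wd)
    then show ?thesis using w 0 l Binarion by (auto simp: alg_carrier_def wd zero_prod_def)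
  next
    case Quaternion
    have "l * w1 = 0" using h[of "(0,1,0,0)"] Quaternion by (auto simp: alg_carrier_def wd)
    moreover have "m * w2 = 0" using h[of "(0,0,1,0)"] Quaternion by (auto simp: alg_carrier_def wd)
    moreover have "l * m * w3 = 0" using h[of "(0,0,0,1)"] Quaternion by (auto simp: alg_carrier_def wd)
    ultimately show ?thesis using 0 l m by (auto simp: wd zero_prod_def)
  qed
qed

lemma nondeg:
  assumes two: "(2::'a::field) \<noteq> 0" and l: "l \<noteq> 0" and m: "m \<noteq> 0"
    and z: "z \<in> Herm k n"
    and h: "\<And>y. y \<in> Herm k n \<Longrightarrow> tr2 l m n z y = (0::'a)"
  shows "z = mzero"
proof -
  have zs: "z i j = qconj (z j i)" for i j
  proof -
    have "mstar z = z" using z unfolding Herm_def by auto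
    then have "mstar z i j = z i j" by simp
    then show ?thesis unfolding mstar_def by simp
  qed
  have zc: "z i j \<in> alg_carrier k" if "i < n" "j < n" for i j
    using z that unfolding Herm_def mat_carrier_def by auto
  have zo: "z i j = 0" if "\<not> (i < n \<and> j < n)" for i j
    using z that unfolding Herm_def mat_carrier_def by auto
  have "z q p = 0" if pq: "p < n" "q < n" for p q
  proof (cases "p = q")
    case True
    have "fst (z p p) = 0"
      using h[OF Emat_Herm_diag[OF pq(1)]] tr2_Emat[OF pq(1) pq(1), of l m z qone]
      by (simp add: qone_def qexp)
    moreover have "z p p = qconj (z p p)" using zs by blast
    ultimately show ?thesis using True two
      by (cases "z p p") (auto simp: zero_prod_def intro: two_ne)
  next
    case False
    show ?thesis
    proof (rule nondeg_entry[OF l m zc[OF pq(2) pq(1)]])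
      fix e :: "'a qd" assume e: "e \<in> alg_carrier k"
      have "0 = tr2 l m n z (madd (Emat p q e) (Emat q p (qconj e)))"
        using h[OF Emat_Herm[OF pq e]] by simp
      also have "\<dots> = fst (qmul l m (z q p) e) + fst (qmul l m (z p q) (qconj e))"
        by (simp add: tr2_madd_right tr2_Emat pq)
      also have "fst (qmul l m (z p q) (qconj e)) = fst (qmul l m (z q p) e)"
        by (subst zs) (rule re_conj_conj)
      finally have "2 * fst (qmul l m (z q p) e) = 0" by simp
      then show "fst (qmul l m (z q p) e) = 0" using two by simp
    qed
  qed
  then show ?thesis
    using zo by (auto simp: fun_eq_iff mzero_def)
qed



lemma inner_Tder:
  assumes "is_inner_derivation k l m n D"
  obtains ps where "set ps \<subseteq> Herm k n \<times> Herm k n"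
    "\<And>x. x \<in> Herm k n \<Longrightarrow> D x = msub (mmul l m n (Sof l m n ps) x) (mmul l m n x (Sof l m n ps))"
proof -
  obtain ps where ps: "set ps \<subseteq> Herm k n \<times> Herm k n"
    "\<And>x. x \<in> Herm k n \<Longrightarrow> D x = foldr madd
            (map (\<lambda>(a, b). msub (jprod l m n a (jprod l m n b x))
                                 (jprod l m n b (jprod l m n a x))) ps) mzero"
    using assms unfolding is_inner_derivation_def by blast
  have "(\<lambda>(a, b). msub (jprod l m n a (jprod l m n b x)) (jprod l m n b (jprod l m n a x)))
      = (\<lambda>(a, b). Tder l m n a b x)" for x
    by (simp add: Tder_def)
  then show ?thesis using that[OF ps(1)] ps(2) by (simp add: foldr_Tder[symmetric])
qed

lemma inner_skew:
  assumes "is_inner_derivation k l m n D" "x \<in> Herm k n" "y \<in> Herm k n"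
  shows "tr2 l m n (D x) y = - tr2 l m n x (D y)"
proof -
  obtain ps where ps: "set ps \<subseteq> Herm k n \<times> Herm k n"
    "\<And>x. x \<in> Herm k n \<Longrightarrow> D x = foldr madd
            (map (\<lambda>(a, b). msub (jprod l m n a (jprod l m n b x))
                                 (jprod l m n b (jprod l m n a x))) ps) mzero"
    using assms unfolding is_inner_derivation_def by blast
  have "(\<lambda>(a, b). msub (jprod l m n a (jprod l m n b x)) (jprod l m n b (jprod l m n a x)))
      = (\<lambda>(a, b). Tder l m n a b x)" for x
    by (simp add: Tder_def)
  then have "\<And>x. x \<in> Herm k n \<Longrightarrow> D x = foldr madd (map (\<lambda>(a, b). Tder l m n a b x) ps) mzero"
    using ps(2) by simp
  then show ?thesis using assms(2,3) tr2_foldr by simp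
qed

lemma inner_leibniz:
  assumes "is_inner_derivation k l m n D" "x \<in> Herm k n" "y \<in> Herm k n"
  shows "D (jprod l m n x y) = madd (jprod l m n (D x) y) (jprod l m n x (D y))"
proof -
  obtain ps where ps: "\<And>x. x \<in> Herm k n \<Longrightarrow> D x = msub (mmul l m n (Sof l m n ps) x) (mmul l m n x (Sof l m n ps))"
    using inner_Tder[OF assms(1)] by blast
  show ?thesis
    using ps[OF Herm_jprod[OF assms(2,3)]] ps[OF assms(2)] ps[OF assms(3)] ad_leibniz by simp
qed

lemma msub_zero_eq: "msub A B = mzero \<Longrightarrow> A = B"
  by (auto simp: fun_eq_iff msub_def mzero_def)

lemma jprod_comm: "jprod l m n x y = jprod l m n y x"
  unfolding jprod_def by (simp add: madd_comm)
lemma jprod_madd_left: "jprod l m n (madd a b) c = madd (jprod l m n a c) (jprod l m n b c)"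
  unfolding jprod_def mmul_madd_left mmul_madd_right
  by (simp add: fun_eq_iff madd_def msmul_def qsmul_add add_ac)
lemma jprod_madd_right: "jprod l m n c (madd a b) = madd (jprod l m n c a) (jprod l m n c b)"
  unfolding jprod_def mmul_madd_left mmul_madd_right
  by (simp add: fun_eq_iff madd_def msmul_def qsmul_add add_ac)



lemma cancel_lemma:
  fixes P Q1 Q2 c1 c2 c1a c1b c2a c2b :: "'b::ab_group_add"
  assumes "c1 + P + (P + c2) = (c1a + Q2 + (Q1 + c2a)) + (c1b + Q1 + (Q2 + c2b))"
    and "c1 = c1a + c1b" and "c2 = c2a + c2b"
  shows "P + P = (Q1 + Q2) + (Q1 + Q2)"
proof -
  have "P + P = (c1 + P + (P + c2)) - c1 - c2" by (simp add: algebra_simps)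
  also have "\<dots> = (c1a + Q2 + (Q1 + c2a)) + (c1b + Q1 + (Q2 + c2b)) - (c1a + c1b) - (c2a + c2b)"
    using assms by simp
  also have "\<dots> = (Q1 + Q2) + (Q1 + Q2)" by (simp add: algebra_simps)
  finally show ?thesis .
qed


lemma double_cancel:
  assumes "(2::'a::field) \<noteq> 0" "(a::'a) + a = b + b"
  shows "a = b"
proof -
  have "2 * a = 2 * b" using assms(2) by (simp only: mult_2)
  then show ?thesis using assms(1) mult_cancel_left by blast
qed

lemma qd_double_cancel:
  assumes "(2::'a::field) \<noteq> 0" "(a::'a qd) + a = b + b"
  shows "a = b"
proof -
  have "fst (a + a) = fst (b + b)" "fst (snd (a + a)) = fst (snd (b + b))"
    "fst (snd (snd (a + a))) = fst (snd (snd (b + b)))" "snd (snd (snd (a + a))) = snd (snd (snd (b + b)))"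
    using assms(2) by (rule arg_cong)+
  then have "fst a + fst a = fst b + fst b" "fst (snd a) + fst (snd a) = fst (snd b) + fst (snd b)"
     "fst (snd (snd a)) + fst (snd (snd a)) = fst (snd (snd b)) + fst (snd (snd b))"
     "snd (snd (snd a)) + snd (snd (snd a)) = snd (snd (snd b)) + snd (snd (snd b))"
    by (simp_all only: fst_add snd_add)
  note c = this
  have "fst a = fst b" "fst (snd a) = fst (snd b)" "fst (snd (snd a)) = fst (snd (snd b))" "snd (snd (snd a)) = snd (snd (snd b))"
    using double_cancel[OF assms(1) c(1)] double_cancel[OF assms(1) c(2)]
      double_cancel[OF assms(1) c(3)] double_cancel[OF assms(1) c(4)] by auto
  then show ?thesis by (simp add: qd_eq_iff)
qed

lemma madd_self_cancel:
  assumes "(2::'a::field) \<noteq> 0" "madd P P = madd (Q::'a mat) Q"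
  shows "P = Q"
proof -
  have "P i j = Q i j" for i j
  proof -
    have "P i j + P i j = Q i j + Q i j" using assms(2) by (simp add: madd_def fun_eq_iff)
    then show ?thesis by (rule qd_double_cancel[OF assms(1)])
  qed
  then show ?thesis by (simp add: fun_eq_iff)
qed

theorem theorem3p4:
  fixes l m :: "'a::field" and k :: alg_kind and n :: nat
    and \<Delta> :: "'a mat \<Rightarrow> 'a mat"
  assumes "(2::'a) \<noteq> 0"
    and "n \<ge> 3"
    and "l \<noteq> 0" and "m \<noteq> 0"
    and "division_alg k l m"
    and "is_2local_inner_derivation k l m n \<Delta>"
  shows "is_derivation k l m n \<Delta>"
proof -
  let ?H = "Herm k n"
  let ?J = "jprod l m n"
  let ?tr = "tr2 l m n"
  have inH: "\<And>x. x \<in> ?H \<Longrightarrow> \<Delta> x \<in> ?H"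
    using assms(6) unfolding is_2local_inner_derivation_def by blast
  have loc: "\<And>x y. x \<in> ?H \<Longrightarrow> y \<in> ?H \<Longrightarrow> \<exists>D. is_inner_derivation k l m n D \<and> \<Delta> x = D x \<and> \<Delta> y = D y"
    using assms(6) unfolding is_2local_inner_derivation_def by blast
  have skew: "?tr (\<Delta> x) y = - ?tr x (\<Delta> y)" if hxy: "x \<in> ?H" "y \<in> ?H" for x y
  proof -
    obtain D where "is_inner_derivation k l m n D" "\<Delta> x = D x" "\<Delta> y = D y"
      using loc[OF hxy] by blast
    then show ?thesis using inner_skew hxy by metis
  qed
  have jor: "\<Delta> (?J x x) = madd (?J (\<Delta> x) x) (?J x (\<Delta> x))" if hx: "x \<in> ?H" for x
  proof -
    obtain D where "is_inner_derivation k l m n D" "\<Delta> x = D x" "\<Delta> (?J x x) = D (?J x x)"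
      using loc[OF hx Herm_jprod[OF hx hx]] by blast
    then show ?thesis using inner_leibniz hx by metis
  qed
  have nd: "\<And>z. z \<in> ?H \<Longrightarrow> (\<And>y. y \<in> ?H \<Longrightarrow> ?tr z y = 0) \<Longrightarrow> z = mzero"
    using nondeg[OF assms(1,3,4)] by blast
  have add: "\<Delta> (madd x y) = madd (\<Delta> x) (\<Delta> y)" if "x \<in> ?H" "y \<in> ?H" for x y
  proof (rule msub_zero_eq, rule nd)
    show "msub (\<Delta> (madd x y)) (madd (\<Delta> x) (\<Delta> y)) \<in> ?H"
      using that by (intro Herm_msub Herm_madd inH)
    fix z :: "'a mat" assume z: "z \<in> ?H"
    show "?tr (msub (\<Delta> (madd x y)) (madd (\<Delta> x) (\<Delta> y))) z = 0"
      using that z Herm_madd[OF that]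
      by (simp add: tr2_msub_left tr2_madd_left skew tr2_madd_left)
  qed
  have smul: "\<Delta> (msmul c x) = msmul c (\<Delta> x)" if "x \<in> ?H" for c x
  proof (rule msub_zero_eq, rule nd)
    show "msub (\<Delta> (msmul c x)) (msmul c (\<Delta> x)) \<in> ?H"
      using that by (intro Herm_msub Herm_msmul inH)
    fix z :: "'a mat" assume z: "z \<in> ?H"
    show "?tr (msub (\<Delta> (msmul c x)) (msmul c (\<Delta> x))) z = 0"
      using that z Herm_msmul[OF that]
      by (simp add: tr2_msub_left tr2_msmul_left skew tr2_msmul_left)
  qed
  have leib: "\<Delta> (?J x y) = madd (?J (\<Delta> x) y) (?J x (\<Delta> y))" if x: "x \<in> ?H" and y: "y \<in> ?H" for x y
  proof (rule madd_self_cancel[OF assms(1)])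
    have hxx: "?J x x \<in> ?H" and hyy: "?J y y \<in> ?H" and hxy: "?J x y \<in> ?H"
      using x y by (auto intro: Herm_jprod)
    have u: "madd x y \<in> ?H" using x y by (rule Herm_madd)
    have e1: "?J (madd x y) (madd x y) = madd (madd (?J x x) (?J x y)) (madd (?J x y) (?J y y))"
      by (simp add: jprod_madd_left jprod_madd_right jprod_comm[of l m n y x])
    have "\<Delta> (?J (madd x y) (madd x y)) = madd (madd (\<Delta> (?J x x)) (\<Delta> (?J x y))) (madd (\<Delta> (?J x y)) (\<Delta> (?J y y)))"
      unfolding e1 using hxx hyy hxy by (simp add: add Herm_madd)
    moreover have "\<Delta> (?J (madd x y) (madd x y)) = madd (?J (madd (\<Delta> x) (\<Delta> y)) (madd x y)) (?J (madd x y) (madd (\<Delta> x) (\<Delta> y)))"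
      using jor[OF u] add[OF x y] by simp
    ultimately have F: "madd (madd (\<Delta> (?J x x)) (\<Delta> (?J x y))) (madd (\<Delta> (?J x y)) (\<Delta> (?J y y)))
       = madd (?J (madd (\<Delta> x) (\<Delta> y)) (madd x y)) (?J (madd x y) (madd (\<Delta> x) (\<Delta> y)))"
      by simp
    have "\<Delta> (?J x y) i j + \<Delta> (?J x y) i j = (?J (\<Delta> x) y i j + ?J x (\<Delta> y) i j) + (?J (\<Delta> x) y i j + ?J x (\<Delta> y) i j)" for i j
    proof (rule cancel_lemma)
      show "\<Delta> (?J x x) i j + \<Delta> (?J x y) i j + (\<Delta> (?J x y) i j + \<Delta> (?J y y) i j)
        = (?J (\<Delta> x) x i j + ?J x (\<Delta> y) i j + (?J (\<Delta> x) y i j + ?J (\<Delta> y) y i j))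
          + (?J x (\<Delta> x) i j + ?J (\<Delta> x) y i j + (?J x (\<Delta> y) i j + ?J y (\<Delta> y) i j))"
        using fun_cong[OF fun_cong[OF F[unfolded jprod_madd_left jprod_madd_right], of i], of j]
        by (simp only: madd_def jprod_comm[of l m n y "\<Delta> x"] jprod_comm[of l m n "\<Delta> y" x])
      show "\<Delta> (?J x x) i j = ?J (\<Delta> x) x i j + ?J x (\<Delta> x) i j"
        using jor[OF x] by (simp add: madd_def)
      show "\<Delta> (?J y y) i j = ?J (\<Delta> y) y i j + ?J y (\<Delta> y) i j"
        using jor[OF y] by (simp add: madd_def)
    qed
    then show "madd (\<Delta> (?J x y)) (\<Delta> (?J x y)) = madd (madd (?J (\<Delta> x) y) (?J x (\<Delta> y))) (madd (?J (\<Delta> x) y) (?J x (\<Delta> y)))"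
      by (simp add: madd_def fun_eq_iff)
  qed
  show ?thesis
    unfolding is_derivation_def using inH add smul leib by blast
qed

end
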